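(* (i) For every integer $k\ge1$, $\alpha_{\mathrm{od}}(Q_{4k})\ge2\sum_{i=1}^{k}\binom{4k-1}{2i-1}$. (ii) $\alpha_{\mathrm{od}}(Q_4)=6$, $\alpha_{\mathrm{od}}(Q_6)=24$, and $\alpha_{\mathrm{od}}(Q_8)=112$. (iii) For every even $d\ge8$, $\alpha_{\mathrm{od}}(Q_d)\ge\frac{7}{16}\cdot2^d$.
   Context: $Q_d$ is the $d$-dimensional hypercube: vertex set $\{0,1\}^d$, two vertices adjacent iff they differ in exactly one coordinate. An odd independent set in $G=(V,E)$ is an independent set $S$ such that every $v\in V\setminus S$ has either no neighbor or an odd number of neighbors in $S$; $\alpha_{\mathrm{od}}(G)$ is its maximum size. *)

theory Defs
  imports Complex_Main
begin

definition independent_set :: "'a set \<Rightarrow> ('a \<Rightarrow> 'a \<Rightarrow> bool) \<Rightarrow> 'a set \<Rightarrow> bool" where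
  "independent_set V E S \<longleftrightarrow> S \<subseteq> V \<and> (\<forall>u\<in>S. \<forall>v\<in>S. \<not> E u v)"

definition odd_independent_set :: "'a set \<Rightarrow> ('a \<Rightarrow> 'a \<Rightarrow> bool) \<Rightarrow> 'a set \<Rightarrow> bool" where
  "odd_independent_set V E S \<longleftrightarrow> independent_set V E S \<and>
     (\<forall>v\<in>V - S. card {u\<in>S. E v u} = 0 \<or> odd (card {u\<in>S. E v u}))"

definition alpha_od :: "'a set \<Rightarrow> ('a \<Rightarrow> 'a \<Rightarrow> bool) \<Rightarrow> nat" where
  "alpha_od V E = Max (card ` {S. odd_independent_set V E S})"

definition hypercube_vertices :: "nat \<Rightarrow> bool list set" where
  "hypercube_vertices d = {x. length x = d}"

definition hypercube_adj :: "bool list \<Rightarrow> bool list \<Rightarrow> bool" where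
  "hypercube_adj x y \<longleftrightarrow> length x = length y \<and> card {i. i < length x \<and> x ! i \<noteq> y ! i} = 1"

definition alpha_od_cube :: "nat \<Rightarrow> nat" where
  "alpha_od_cube d = alpha_od (hypercube_vertices d) hypercube_adj"

end

theory Submission
  imports Defs
begin


definition fl :: "nat \<Rightarrow> nat set \<Rightarrow> nat set" where
  "fl i A = (if i \<in> A then A - {i} else insert i A)"

lemma fl_fl[simp]: "fl i (fl i A) = A"
  unfolding fl_def by auto

lemma fl_comm: "fl i (fl j A) = fl j (fl i A)"
  unfolding fl_def by auto

lemma fl_mem: "x \<in> fl i A \<longleftrightarrow> (x = i \<longleftrightarrow> x \<notin> A)"
  unfolding fl_def by auto

lemma fl_inj: "fl i A = fl j A \<longleftrightarrow> i = j"
  unfolding fl_def by auto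

lemma fl_neq[simp]: "fl i A \<noteq> A"
  unfolding fl_def by auto

lemma fl_sub: "A \<subseteq> {..<n} \<Longrightarrow> i < n \<Longrightarrow> fl i A \<subseteq> {..<n}"
  unfolding fl_def by auto

definition vset :: "bool list \<Rightarrow> nat set" where
  "vset x = {i. i < length x \<and> x ! i}"

lemma vset_sub: "vset x \<subseteq> {..<length x}"
  unfolding vset_def by auto

lemma vset_inj: "length x = length y \<Longrightarrow> vset x = vset y \<Longrightarrow> x = y"
proof (rule nth_equalityI)
  fix i assume "length x = length y" "vset x = vset y" "i < length x"
  then show "x ! i = y ! i"
    unfolding vset_def by (metis (mono_tags, lifting) mem_Collect_eq)
qed

lemma vset_bij: "bij_betw vset (hypercube_vertices n) (Pow {..<n})"
proof -
  have "inj_on vset (hypercube_vertices n)"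
    by (auto simp: inj_on_def hypercube_vertices_def intro: vset_inj)
  moreover have "vset ` hypercube_vertices n = Pow {..<n}"
  proof
    show "vset ` hypercube_vertices n \<subseteq> Pow {..<n}"
      using vset_sub by (auto simp: hypercube_vertices_def)
    show "Pow {..<n} \<subseteq> vset ` hypercube_vertices n"
    proof
      fix A assume "A \<in> Pow {..<n}"
      then have "vset (map (\<lambda>i. i \<in> A) [0..<n]) = A"
        by (auto simp: vset_def)
      moreover have "map (\<lambda>i. i \<in> A) [0..<n] \<in> hypercube_vertices n"
        by (simp add: hypercube_vertices_def)
      ultimately show "A \<in> vset ` hypercube_vertices n"
        by (metis image_eqI)
    qed
  qed
  ultimately show ?thesis by (simp add: bij_betw_def)
qed

definition sadj :: "nat \<Rightarrow> nat set \<Rightarrow> nat set \<Rightarrow> bool" where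
  "sadj n A B \<longleftrightarrow> (\<exists>i<n. B = fl i A)"

lemma adj_vset:
  assumes "length x = n" "length y = n"
  shows "hypercube_adj x y \<longleftrightarrow> sadj n (vset x) (vset y)"
proof -
  have eq: "{i. i < length x \<and> x ! i \<noteq> y ! i} = {i. i < n \<and> (i \<in> vset x \<longleftrightarrow> i \<notin> vset y)}"
    using assms by (auto simp: vset_def)
  show ?thesis
  proof
    assume "hypercube_adj x y"
    then have "card {i. i < length x \<and> x ! i \<noteq> y ! i} = 1"
      unfolding hypercube_adj_def by blast
    then have "card {i. i < n \<and> (i \<in> vset x \<longleftrightarrow> i \<notin> vset y)} = 1"
      unfolding eq .
    then obtain j where j: "{i. i < n \<and> (i \<in> vset x \<longleftrightarrow> i \<notin> vset y)} = {j}"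
      by (auto simp: card_1_singleton_iff)
    then have "j < n" by auto
    moreover have "vset y = fl j (vset x)"
    proof
      show "vset y \<subseteq> fl j (vset x)"
      proof
        fix i assume "i \<in> vset y"
        then have "i < n" using assms vset_sub by fastforce
        then show "i \<in> fl j (vset x)" using j \<open>i \<in> vset y\<close> unfolding fl_mem by blast
      qed
      show "fl j (vset x) \<subseteq> vset y"
      proof
        fix i assume i: "i \<in> fl j (vset x)"
        show "i \<in> vset y"
        proof (cases "i = j")
          case True then show ?thesis using j i unfolding fl_mem by blast
        next
          case False
          then have "i \<in> vset x" using i unfolding fl_mem by blast
          then have "i < n" using assms vset_sub by fastforce
          then show ?thesis using j False \<open>i \<in> vset x\<close> by blast
        qed
      qed
    qed
    ultimately show "sadj n (vset x) (vset y)" by (auto simp: sadj_def)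
  next
    assume "sadj n (vset x) (vset y)"
    then obtain j where "j < n" "vset y = fl j (vset x)" by (auto simp: sadj_def)
    then have "{i. i < n \<and> (i \<in> vset x \<longleftrightarrow> i \<notin> vset y)} = {j}"
      by (auto simp: fl_mem)
    then have "card {i. i < length x \<and> x ! i \<noteq> y ! i} = 1" unfolding eq by simp
    then show "hypercube_adj x y" using assms unfolding hypercube_adj_def by simp
  qed
qed



lemma oi_iso:
  assumes bij: "bij_betw f V W" and adj: "\<forall>u\<in>V. \<forall>v\<in>V. E u v = F (f u) (f v)" and SV: "S \<subseteq> V"
  shows "odd_independent_set V E S \<longleftrightarrow> odd_independent_set W F (f ` S)"
proof -
  have inj: "inj_on f V" and img: "f ` V = W" using bij by (auto simp: bij_betw_def)
  have fS: "f ` S \<subseteq> W" using SV img by auto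
  have ind: "independent_set V E S \<longleftrightarrow> independent_set W F (f ` S)"
    using SV fS adj unfolding independent_set_def by (auto; meson subsetD)
  have diff: "W - f ` S = f ` (V - S)" using img inj SV by (auto simp: inj_on_def) 
  have deg: "card {u\<in>S. E v u} = card {u\<in>f ` S. F (f v) u}" if "v \<in> V" for v
  proof -
    have "{u\<in>f ` S. F (f v) u} = f ` {u\<in>S. E v u}" using adj that SV by auto
    moreover have "inj_on f {u\<in>S. E v u}" using inj SV by (auto intro: inj_on_subset)
    ultimately show ?thesis by (simp add: card_image)
  qed
  show ?thesis unfolding odd_independent_set_def ind diff using deg by auto
qed

lemma alpha_iso:
  assumes bij: "bij_betw f V W" and adj: "\<forall>u\<in>V. \<forall>v\<in>V. E u v = F (f u) (f v)"
  shows "alpha_od V E = alpha_od W F"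
proof -
  have inj: "inj_on f V" and img: "f ` V = W" using bij by (auto simp: bij_betw_def)
  have "card ` {S. odd_independent_set V E S} = card ` {S. odd_independent_set W F S}"
  proof
    show "card ` {S. odd_independent_set V E S} \<subseteq> card ` {S. odd_independent_set W F S}"
    proof
      fix c assume "c \<in> card ` {S. odd_independent_set V E S}"
      then obtain S where S: "odd_independent_set V E S" "c = card S" by auto
      then have SV: "S \<subseteq> V" by (simp add: odd_independent_set_def independent_set_def)
      then have "odd_independent_set W F (f ` S)" using oi_iso[OF bij adj SV] S by simp
      moreover have "card (f ` S) = c" using S SV inj by (simp add: card_image inj_on_subset)
      ultimately show "c \<in> card ` {S. odd_independent_set W F S}" by auto
    qed
    show "card ` {S. odd_independent_set W F S} \<subseteq> card ` {S. odd_independent_set V E S}"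
    proof
      fix c assume "c \<in> card ` {S. odd_independent_set W F S}"
      then obtain S' where S': "odd_independent_set W F S'" "c = card S'" by auto
      then have SW: "S' \<subseteq> W" by (simp add: odd_independent_set_def independent_set_def)
      define S where "S = {v\<in>V. f v \<in> S'}"
      have SV: "S \<subseteq> V" by (auto simp: S_def)
      have fS: "f ` S = S'" using SW img by (auto simp: S_def)
      have "odd_independent_set V E S" using oi_iso[OF bij adj SV] S' fS by simp
      moreover have "card S = c" using S' fS SV inj by (metis card_image inj_on_subset)
      ultimately show "c \<in> card ` {S. odd_independent_set V E S}" by force
    qed
  qed
  then show ?thesis unfolding alpha_od_def by simp
qed

lemma alpha_cube_set: "alpha_od_cube n = alpha_od (Pow {..<n}) (sadj n)"
  unfolding alpha_od_cube_def
  by (rule alpha_iso[OF vset_bij]) (auto simp: hypercube_vertices_def adj_vset)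

definition deg :: "nat \<Rightarrow> nat set set \<Rightarrow> nat set \<Rightarrow> nat" where
  "deg n S A = card {i. i < n \<and> fl i A \<in> S}"

definition oi :: "nat \<Rightarrow> nat set set \<Rightarrow> bool" where
  "oi n S \<longleftrightarrow> S \<subseteq> Pow {..<n} \<and> (\<forall>A\<in>S. \<forall>i<n. fl i A \<notin> S) \<and>
     (\<forall>A. A \<subseteq> {..<n} \<longrightarrow> A \<notin> S \<longrightarrow> deg n S A = 0 \<or> odd (deg n S A))"

lemma oi_set_eq: "odd_independent_set (Pow {..<n}) (sadj n) S \<longleftrightarrow> oi n S"
proof -
  have deq: "card {u\<in>S. sadj n A u} = deg n S A" for A
  proof -
    have "{u\<in>S. sadj n A u} = (\<lambda>i. fl i A) ` {i. i < n \<and> fl i A \<in> S}"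
      by (auto simp: sadj_def)
    moreover have "inj_on (\<lambda>i. fl i A) {i. i < n \<and> fl i A \<in> S}"
      by (auto simp: inj_on_def fl_inj)
    ultimately show ?thesis by (simp add: card_image deg_def)
  qed
  show ?thesis unfolding odd_independent_set_def independent_set_def oi_def deq
    by (simp add: sadj_def; blast)
qed

lemma alpha_ge:
  assumes "oi n S" shows "card S \<le> alpha_od_cube n"
proof -
  have fin: "finite {S. oi n S}"
    by (rule finite_subset[of _ "Pow (Pow {..<n})"]) (auto simp: oi_def)
  show ?thesis unfolding alpha_cube_set alpha_od_def oi_set_eq
    using assms fin by (auto intro: Max_ge)
qed

lemma alpha_le:
  assumes "\<And>S. oi n S \<Longrightarrow> card S \<le> N" shows "alpha_od_cube n \<le> N"
proof -
  have fin: "finite {S. oi n S}"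
    by (rule finite_subset[of _ "Pow (Pow {..<n})"]) (auto simp: oi_def)
  have ne: "oi n {}" by (simp add: oi_def deg_def)
  show ?thesis unfolding alpha_cube_set alpha_od_def oi_set_eq
    using assms fin ne by (subst Max_le_iff) auto
qed



lemma card_filter_sum: "finite Y \<Longrightarrow> card {b\<in>Y. P b} = (\<Sum>b\<in>Y. if P b then 1 else 0)"
  by (simp add: sum.inter_filter[symmetric])

lemma sum_card_swap:
  assumes "finite X" "finite Y"
  shows "(\<Sum>a\<in>X. card {b\<in>Y. P a b}) = (\<Sum>b\<in>Y. card {a\<in>X. P a b})"
  using assms by (simp add: card_filter_sum sum.swap[of _ X Y])

lemma oi_sub: "oi n S \<Longrightarrow> A \<in> S \<Longrightarrow> A \<subseteq> {..<n}"
  by (auto simp: oi_def)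

lemma oi_ind: "oi n S \<Longrightarrow> A \<in> S \<Longrightarrow> i < n \<Longrightarrow> fl i A \<notin> S"
  by (auto simp: oi_def)

lemma oi_odd: "oi n S \<Longrightarrow> A \<subseteq> {..<n} \<Longrightarrow> A \<notin> S \<Longrightarrow> deg n S A = 0 \<or> odd (deg n S A)"
  by (auto simp: oi_def)

lemma deg_le: "deg n S A \<le> n"
proof -
  have "deg n S A \<le> card {..<n}" unfolding deg_def by (rule card_mono) auto
  then show ?thesis by simp
qed

lemma double_count:
  assumes "oi n S"
  shows "(\<Sum>A\<in>Pow {..<n} - S. deg n S A) = n * card S"
proof -
  have "(\<Sum>A\<in>Pow {..<n} - S. deg n S A) = (\<Sum>A\<in>Pow {..<n} - S. card {i\<in>{..<n}. fl i A \<in> S})"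
    unfolding deg_def by (simp add: lessThan_def)
  also have "\<dots> = (\<Sum>i\<in>{..<n}. card {A\<in>Pow {..<n} - S. fl i A \<in> S})"
    by (rule sum_card_swap) auto
  also have "\<dots> = (\<Sum>i\<in>{..<n}. card S)"
  proof (rule sum.cong[OF refl])
    fix i assume i: "i \<in> {..<n}"
    have "{A\<in>Pow {..<n} - S. fl i A \<in> S} = fl i ` S"
    proof
      show "{A\<in>Pow {..<n} - S. fl i A \<in> S} \<subseteq> fl i ` S"
        by (auto intro!: image_eqI[where x="fl i _"])
      show "fl i ` S \<subseteq> {A\<in>Pow {..<n} - S. fl i A \<in> S}"
      proof
        fix B assume "B \<in> fl i ` S"
        then obtain A where A: "A \<in> S" "B = fl i A" by auto
        have "B \<notin> S" using oi_ind[OF assms A(1)] i A by simp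
        moreover have "B \<subseteq> {..<n}" using fl_sub[OF oi_sub[OF assms A(1)]] i A by simp
        ultimately show "B \<in> {A\<in>Pow {..<n} - S. fl i A \<in> S}" using A by simp
      qed
    qed
    moreover have "inj_on (fl i) S" by (metis fl_fl inj_on_inverseI)
    ultimately show "card {A\<in>Pow {..<n} - S. fl i A \<in> S} = card S" by (simp add: card_image)
  qed
  finally show ?thesis by simp
qed

lemma card_T: assumes "oi n S" shows "card (Pow {..<n} - S) = 2 ^ n - card S"
proof -
  have sub: "S \<subseteq> Pow {..<n}" using assms by (simp add: oi_def)
  then have "finite S" by (rule finite_subset) simp
  then show ?thesis using card_Diff_subset[OF _ sub] by (simp add: card_Pow)
qed

lemma deg_odd_le:
  assumes "oi n S" "even n" "A \<in> Pow {..<n} - S"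
  shows "deg n S A \<le> n - 1"
proof -
  have "deg n S A = 0 \<or> odd (deg n S A)" using assms oi_odd by auto
  moreover have "deg n S A \<le> n" by (rule deg_le)
  ultimately show ?thesis using assms(2) by (cases "deg n S A = n") auto
qed

lemma Q4_bound:
  assumes "oi 4 S" shows "card S \<le> 6"
proof -
  have "(\<Sum>A\<in>Pow {..<4} - S. deg 4 S A) \<le> (\<Sum>A\<in>Pow {..<4::nat} - S. 3)"
    by (rule sum_mono) (use deg_odd_le[OF assms] in auto)
  then have "4 * card S \<le> 3 * (16 - card S)"
    using double_count[OF assms] card_T[OF assms] by simp
  then show ?thesis by linarith
qed

lemma full_free:
  assumes S: "oi n S" and A: "A \<in> Pow {..<n} - S" and d: "deg n S A = n - 1" and n: "n \<ge> 1"
  shows "\<exists>j<n. fl j A \<notin> S \<and> deg n S (fl j A) = 0 \<and> fl j A \<subseteq> {..<n}"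
proof -
  let ?I = "{i. i < n \<and> fl i A \<in> S}"
  have "card ?I < n" using d n unfolding deg_def by simp
  then have "?I \<noteq> {..<n}"
  proof -
    assume c: "card ?I < n"
    show "?I \<noteq> {..<n}"
    proof
      assume "?I = {..<n}"
      then have "card ?I = n" by (metis card_lessThan)
      then show False using c by simp
    qed
  qed
  then obtain j where j: "j < n" "fl j A \<notin> S" by auto
  have "?I \<subseteq> {..<n} - {j}" using j by auto
  moreover have "card ?I = card ({..<n} - {j})" using d j unfolding deg_def by simp
  ultimately have I: "?I = {..<n} - {j}" by (intro card_subset_eq) auto
  have "{i. i < n \<and> fl i (fl j A) \<in> S} = {}"
  proof (rule ccontr)
    assume "{i. i < n \<and> fl i (fl j A) \<in> S} \<noteq> {}"
    then obtain i where i: "i < n" "fl i (fl j A) \<in> S" by auto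
    show False
    proof (cases "i = j")
      case True then show ?thesis using i j A by simp
    next
      case False
      then have "fl i A \<in> S" using I i by auto
      then have "fl j (fl i A) \<notin> S" using oi_ind[OF S] j by auto
      then show ?thesis using i fl_comm by metis
    qed
  qed
  then have "deg n S (fl j A) = 0" unfolding deg_def by simp
  moreover have "fl j A \<subseteq> {..<n}" using A j fl_sub by auto
  ultimately show ?thesis using j by auto
qed

definition FR :: "nat \<Rightarrow> nat set set \<Rightarrow> nat set set" where
  "FR n S = {A \<in> Pow {..<n} - S. deg n S A = 0}"

definition HI :: "nat \<Rightarrow> nat set set \<Rightarrow> nat set set" where
  "HI n S = {A \<in> Pow {..<n} - S. deg n S A = n - 1}"

definition NZ :: "nat \<Rightarrow> nat set set \<Rightarrow> nat set set" where
  "NZ n S = {A \<in> Pow {..<n} - S. deg n S A \<noteq> 0}"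

lemma HI_le:
  assumes S: "oi n S" and n: "n \<ge> 1"
  shows "card (HI n S) \<le> (\<Sum>u\<in>FR n S. card {j. j < n \<and> fl j u \<in> HI n S})"
proof -
  have fin: "finite (FR n S)" unfolding FR_def by auto
  have "HI n S \<subseteq> (\<lambda>(u, j). fl j u) ` (SIGMA u:FR n S. {j. j < n \<and> fl j u \<in> HI n S})"
  proof
    fix A assume A: "A \<in> HI n S"
    then obtain j where j: "j < n" "fl j A \<notin> S" "deg n S (fl j A) = 0" "fl j A \<subseteq> {..<n}"
      using full_free[OF S _ _ n] unfolding HI_def by blast
    then have "(fl j A, j) \<in> (SIGMA u:FR n S. {j. j < n \<and> fl j u \<in> HI n S})"
      using A by (auto simp: FR_def)
    then show "A \<in> (\<lambda>(u, j). fl j u) ` (SIGMA u:FR n S. {j. j < n \<and> fl j u \<in> HI n S})"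
      by (auto intro!: image_eqI[where x="(fl j A, j)"])
  qed
  then have "card (HI n S) \<le> card ((\<lambda>(u, j). fl j u) ` (SIGMA u:FR n S. {j. j < n \<and> fl j u \<in> HI n S}))"
    using fin by (intro card_mono) auto
  also have "\<dots> \<le> card (SIGMA u:FR n S. {j. j < n \<and> fl j u \<in> HI n S})"
    using fin by (intro card_image_le) auto
  also have "\<dots> = (\<Sum>u\<in>FR n S. card {j. j < n \<and> fl j u \<in> HI n S})"
    using fin by (simp add: card_SigmaI)
  finally show ?thesis .
qed

lemma main_ineq:
  assumes S: "oi n S" and n: "even n" "n \<ge> 4"
  shows "n * card S \<le> (n - 3) * card (NZ n S) + 2 * card (HI n S)"
    and "card (NZ n S) + card (FR n S) + card S = 2 ^ n"
    and "card (HI n S) \<le> card (NZ n S)"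
proof -
  have fin: "finite (Pow {..<n} - S)" by auto
  have "(\<Sum>A\<in>Pow {..<n} - S. deg n S A) \<le>
        (\<Sum>A\<in>Pow {..<n} - S. (n - 3) * (if deg n S A \<noteq> 0 then 1 else 0) + 2 * (if deg n S A = n - 1 then 1 else 0))"
  proof (rule sum_mono)
    fix A assume A: "A \<in> Pow {..<n} - S"
    have "deg n S A = 0 \<or> odd (deg n S A)" using A oi_odd[OF S] by auto
    moreover have "deg n S A \<le> n - 1" by (rule deg_odd_le[OF S n(1) A])
    ultimately have "deg n S A = 0 \<or> deg n S A = n - 1 \<or> deg n S A \<le> n - 3"
      using n by presburger
    then show "deg n S A \<le> (n - 3) * (if deg n S A \<noteq> 0 then 1 else 0) + 2 * (if deg n S A = n - 1 then 1 else 0)"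
      using n by auto
  qed
  also have "\<dots> = (n - 3) * card (NZ n S) + 2 * card (HI n S)"
  proof -
    have e1: "card (NZ n S) = (\<Sum>A\<in>Pow {..<n} - S. if deg n S A \<noteq> 0 then 1 else 0)"
      unfolding NZ_def by (rule card_filter_sum[OF fin])
    have e2: "card (HI n S) = (\<Sum>A\<in>Pow {..<n} - S. if deg n S A = n - 1 then 1 else 0)"
      unfolding HI_def by (rule card_filter_sum[OF fin])
    show ?thesis unfolding e1 e2 by (simp only: sum.distrib sum_distrib_left mult.commute)
  qed
  finally show "n * card S \<le> (n - 3) * card (NZ n S) + 2 * card (HI n S)"
    using double_count[OF S] by simp
  have "Pow {..<n} - S = NZ n S \<union> FR n S" "NZ n S \<inter> FR n S = {}"
    unfolding NZ_def FR_def by auto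
  then have "card (Pow {..<n} - S) = card (NZ n S) + card (FR n S)"
    using fin by (metis card_Un_disjoint finite_Un)
  moreover have "card S \<le> 2 ^ n" using S unfolding oi_def
    by (metis card_Pow card_lessThan card_mono finite_Pow_iff finite_lessThan)
  ultimately show "card (NZ n S) + card (FR n S) + card S = 2 ^ n" using card_T[OF S] by simp
  show "card (HI n S) \<le> card (NZ n S)"
    using n unfolding HI_def NZ_def by (intro card_mono) auto
qed

lemma Q8_bound:
  assumes S: "oi 8 S" shows "card S \<le> 112"
proof -
  have m: "card {j. j < 8 \<and> fl j u \<in> HI 8 S} \<le> 8" for u
    by (rule order.trans[OF card_mono[of "{..<8}"]]) auto
  have "card (HI 8 S) \<le> (\<Sum>u\<in>FR 8 S. card {j. j < 8 \<and> fl j u \<in> HI 8 S})"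
    by (rule HI_le[OF S]) simp
  also have "\<dots> \<le> (\<Sum>u\<in>FR 8 S. 8)" by (rule sum_mono) (rule m)
  finally have h: "card (HI 8 S) \<le> 8 * card (FR 8 S)" by simp
  have "8 * card S \<le> 5 * card (NZ 8 S) + 2 * card (HI 8 S)"
    "card (NZ 8 S) + card (FR 8 S) + card S = 256" "card (HI 8 S) \<le> card (NZ 8 S)"
    using main_ineq[OF S] by auto
  then show ?thesis using h by linarith
qed



definition tr :: "nat set \<Rightarrow> nat set \<Rightarrow> nat set" where
  "tr u A = (A - u) \<union> (u - A)"

lemma tr_tr[simp]: "tr u (tr u A) = A" unfolding tr_def by auto
lemma tr_fl: "tr u (fl i A) = fl i (tr u A)" unfolding tr_def fl_def by auto
lemma tr_sub: "A \<subseteq> {..<n} \<Longrightarrow> u \<subseteq> {..<n} \<Longrightarrow> tr u A \<subseteq> {..<n}" unfolding tr_def by auto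
lemma tr_inj: "inj (tr u)" by (metis tr_tr inj_on_inverseI)

lemma tr_mem: "tr u A \<in> tr u ` S \<longleftrightarrow> A \<in> S"
  using tr_inj by (auto simp: inj_def)

lemma oi_tr:
  assumes S: "oi n S" and u: "u \<subseteq> {..<n}"
  shows "oi n (tr u ` S)" "card (tr u ` S) = card S"
proof -
  have degeq: "deg n (tr u ` S) (tr u A) = deg n S A" for A
    unfolding deg_def by (simp add: tr_fl[symmetric] tr_mem)
  show "oi n (tr u ` S)" unfolding oi_def
  proof (intro conjI allI ballI impI)
    show "tr u ` S \<subseteq> Pow {..<n}"
    proof
      fix A assume "A \<in> tr u ` S"
      then obtain B where "B \<in> S" "A = tr u B" by auto
      then show "A \<in> Pow {..<n}" using tr_sub[OF oi_sub[OF S] u] by auto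
    qed
  next
    fix A i assume "A \<in> tr u ` S" "i < n"
    then obtain B where B: "B \<in> S" "A = tr u B" by auto
    then show "fl i A \<notin> tr u ` S" using oi_ind[OF S B(1) \<open>i < n\<close>]
      by (simp add: tr_fl[symmetric] tr_mem)
  next
    fix A assume A: "A \<subseteq> {..<n}" "A \<notin> tr u ` S"
    then have "tr u A \<subseteq> {..<n}" "tr u A \<notin> S" using u tr_sub
      by (auto, metis tr_tr image_eqI)
    then show "deg n (tr u ` S) A = 0 \<or> odd (deg n (tr u ` S) A)"
      using oi_odd[OF S] degeq[of "tr u A"] by simp
  qed
  show "card (tr u ` S) = card S" using tr_inj[of u] by (meson card_image inj_on_subset subset_UNIV)
qed

abbreviation U6 :: "nat set" where "U6 \<equiv> {..<6}"

lemma caseA_card: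
  assumes S: "oi 6 S" and e: "{} \<notin> S"
    and H2: "\<And>B. B \<subseteq> U6 \<Longrightarrow> card B = 2 \<Longrightarrow> B \<in> S"
  shows "card S \<le> 24"
proof -
  have finU: "finite U6" by simp
  have sub: "\<And>A. A \<in> S \<Longrightarrow> A \<subseteq> U6" using oi_sub[OF S] by auto
  have cardA: "card A = 2 \<or> card A = 4 \<or> card A = 5 \<or> card A = 6" if A: "A \<in> S" for A
  proof -
    have AU: "A \<subseteq> U6" using sub A .
    have le: "card A \<le> 6" using card_mono[OF finU AU] by simp
    have "card A \<noteq> 0" using e A AU by (metis card_0_eq finU finite_subset)
    moreover have "card A \<noteq> 1"
    proof
      assume c: "card A = 1"
      then have "A \<noteq> U6" by auto
      then obtain b where b: "b < 6" "b \<notin> A" using AU by auto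
      have "fl b A = insert b A" using b by (simp add: fl_def)
      moreover have "card (insert b A) = 2" using c b AU by (simp add: finite_subset)
      moreover have "insert b A \<subseteq> U6" using AU b by auto
      ultimately have "fl b A \<in> S" using H2 by simp
      then show False using oi_ind[OF S A b(1)] by simp
    qed
    moreover have "card A \<noteq> 3"
    proof
      assume c: "card A = 3"
      then obtain b where b: "b \<in> A" by fastforce
      then have bl: "b < 6" using AU by auto
      have "fl b A = A - {b}" using b by (simp add: fl_def)
      moreover have "card (A - {b}) = 2" using c b by simp
      moreover have "A - {b} \<subseteq> U6" using AU by auto
      ultimately have "fl b A \<in> S" using H2 by simp
      then show False using oi_ind[OF S A bl] by simp
    qed
    ultimately show ?thesis using le by linarith
  qed
  define L2 where "L2 = {B. B \<subseteq> U6 \<and> card B = 2}"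
  define S4 where "S4 = {A\<in>S. card A = 4}"
  define S5 where "S5 = {A\<in>S. card A = 5}"
  define S6 where "S6 = {A\<in>S. card A = 6}"
  have Ssub: "S \<subseteq> L2 \<union> S4 \<union> S5 \<union> S6"
    using cardA sub unfolding L2_def S4_def S5_def S6_def by blast
  have finS: "finite S" using sub by (meson finU finite_Pow_iff finite_subset subsetI PowI)
  have cS: "card S \<le> card L2 + card S4 + card S5 + card S6"
  proof -
    have "card S \<le> card (L2 \<union> S4 \<union> S5 \<union> S6)"
      using Ssub by (intro card_mono) (auto simp: L2_def S4_def S5_def S6_def finS)
    also have "\<dots> \<le> card L2 + card S4 + card S5 + card S6"
      by (metis (no_types, lifting) add_le_mono card_Un_le le_refl order_trans)
    finally show ?thesis .
  qed
  have cL2: "card L2 = 15" unfolding L2_def using n_subsets[OF finU, of 2] by (simp add: choose_two)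
  have S6sub: "S6 \<subseteq> {U6}"
  proof
    fix A assume "A \<in> S6"
    then have "A \<subseteq> U6" "card A = card U6" using sub unfolding S6_def by auto
    then show "A \<in> {U6}" using card_subset_eq[OF finU] by auto
  qed
  have S5sub: "S5 \<subseteq> (\<lambda>x. U6 - {x}) ` U6"
  proof
    fix A assume "A \<in> S5"
    then have AU: "A \<subseteq> U6" and c: "card A = 5" using sub unfolding S5_def by auto
    then have "A \<noteq> U6" by auto
    then obtain x where x: "x < 6" "x \<notin> A" using AU by auto
    have "A \<subseteq> U6 - {x}" using AU x by auto
    moreover have "card A = card (U6 - {x})" using c x by simp
    ultimately have "A = U6 - {x}" using card_subset_eq[of "U6 - {x}"] by auto
    then show "A \<in> (\<lambda>x. U6 - {x}) ` U6" using x by auto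
  qed
  have cS5: "card S5 \<le> 6"
    using card_mono[OF _ S5sub] card_image_le[of U6 "\<lambda>x. U6 - {x}"] by simp
  have cS6: "card S6 \<le> 1" using card_mono[OF _ S6sub] by simp
  define \<rho> where "\<rho> x y \<longleftrightarrow> U6 - {x, y} \<in> S" for x y
  have rho_sym: "\<rho> x y = \<rho> y x" for x y unfolding \<rho>_def by (simp add: insert_commute)
  have triple: "\<rho> b c = (\<rho> a b \<noteq> \<rho> a c)"
    if abc: "a < 6" "b < 6" "c < 6" "a \<noteq> b" "b \<noteq> c" "a \<noteq> c" for a b c
  proof -
    define C where "C = U6 - {a, b, c}"
    have CU: "C \<subseteq> U6" unfolding C_def by auto
    have cC: "card C = 3" unfolding C_def using abc by (simp add: card_Diff_subset)
    have CnS: "C \<notin> S" using cardA cC by fastforce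
    have inC: "fl i C \<in> S" if "i \<in> C" for i
    proof -
      have "fl i C = C - {i}" using that by (simp add: fl_def)
      moreover have "card (C - {i}) = 2" using cC that by simp
      ultimately show ?thesis using H2 CU by auto
    qed
    have fa: "fl a C = U6 - {b, c}" "fl b C = U6 - {a, c}" "fl c C = U6 - {a, b}"
      unfolding C_def fl_def using abc by auto
    let ?P = "\<lambda>i. fl i C \<in> S"
    have Iset: "{i. i < 6 \<and> ?P i} = C \<union> {i\<in>{a,b,c}. ?P i}"
      using inC abc unfolding C_def by auto
    have disj: "C \<inter> {i\<in>{a,b,c}. ?P i} = {}" unfolding C_def by auto
    have d: "deg 6 S C = 3 + card {i\<in>{a,b,c}. ?P i}"
      unfolding deg_def Iset using disj cC by (simp add: card_Un_disjoint finite_subset[OF CU])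
    have "deg 6 S C = 0 \<or> odd (deg 6 S C)" using oi_odd[OF S CU CnS] .
    then have ev0: "even (card {i\<in>{a,b,c}. ?P i})" using d by auto
    have seq: "{i\<in>{a,b,c}. ?P i} = (if ?P a then {a} else {}) \<union> (if ?P b then {b} else {}) \<union> (if ?P c then {c} else {})"
      by auto
    have ev: "even (card ((if ?P a then {a} else {}) \<union> (if ?P b then {b} else {}) \<union> (if ?P c then {c} else {})))"
      using ev0 unfolding seq .
    show ?thesis
      using ev abc unfolding \<rho>_def fa[symmetric]
      by (cases "?P a"; cases "?P b"; cases "?P c"; simp add: insert_commute)
  qed
  define \<beta> where "\<beta> x \<longleftrightarrow> x \<noteq> 0 \<and> \<rho> 0 x" for x
  have rho_beta: "\<rho> x y = (\<beta> x \<noteq> \<beta> y)" if "x < 6" "y < 6" "x \<noteq> y" for x y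
  proof (cases "x = 0")
    case True then show ?thesis using that by (simp add: \<beta>_def)
  next
    case x0: False
    show ?thesis
    proof (cases "y = 0")
      case True then show ?thesis using that x0 by (simp add: \<beta>_def rho_sym)
    next
      case False
      then show ?thesis using triple[of 0 x y] that x0 by (simp add: \<beta>_def)
    qed
  qed
  define K where "K = {x. x < 6 \<and> \<beta> x}"
  have KU: "K \<subseteq> U6" unfolding K_def by auto
  have S4sub: "S4 \<subseteq> (\<lambda>(x, y). U6 - {x, y}) ` (K \<times> (U6 - K))"
  proof
    fix A assume A: "A \<in> S4"
    then have AU: "A \<subseteq> U6" and c: "card A = 4" and AS: "A \<in> S" using sub unfolding S4_def by auto
    have "card (U6 - A) = 2" using c AU by (simp add: card_Diff_subset finite_subset)
    then obtain x y where xy: "U6 - A = {x, y}" "x \<noteq> y" by (auto simp: card_2_iff)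
    have xy6: "x < 6" "y < 6" using xy by auto
    have Aeq: "A = U6 - {x, y}" using xy AU by auto
    then have r: "\<rho> x y" using AS by (simp add: \<rho>_def)
    then have "\<beta> x \<noteq> \<beta> y" using rho_beta xy xy6 by simp
    then show "A \<in> (\<lambda>(x, y). U6 - {x, y}) ` (K \<times> (U6 - K))"
    proof (cases "\<beta> x")
      case True
      then have "(x, y) \<in> K \<times> (U6 - K)" using \<open>\<beta> x \<noteq> \<beta> y\<close> xy6 by (auto simp: K_def)
      then show ?thesis using Aeq by force
    next
      case False
      then have "(y, x) \<in> K \<times> (U6 - K)" using \<open>\<beta> x \<noteq> \<beta> y\<close> xy6 by (auto simp: K_def)
      moreover have "A = U6 - {y, x}" using Aeq by (simp add: insert_commute)
      ultimately show ?thesis by force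
    qed
  qed
  have cS4: "card S4 \<le> card K * (6 - card K)"
  proof -
    have "card S4 \<le> card (K \<times> (U6 - K))"
      using card_mono[OF _ S4sub] card_image_le[of "K \<times> (U6 - K)" "\<lambda>(x, y). U6 - {x, y}"]
      by (simp add: finite_subset[OF KU])
    also have "\<dots> = card K * (6 - card K)"
      using KU by (simp add: card_cartesian_product card_Diff_subset finite_subset)
    finally show ?thesis .
  qed
  have kle: "card K \<le> 6" using card_mono[OF finU KU] by simp
  have k9: "card K * (6 - card K) \<le> 9"
  proof -
    have "card K \<in> {0,1,2,3,4,5,6}" using kle by auto
    then show ?thesis by auto
  qed
  show ?thesis
  proof (cases "U6 \<in> S")
    case True
    have "S5 = {}"
    proof (rule ccontr)
      assume "S5 \<noteq> {}"
      then obtain A where A: "A \<in> S5" by blast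
      then obtain x where x0: "x \<in> U6" "A = U6 - {x}" using S5sub by blast
      then have x: "x < 6" "U6 - {x} \<in> S" using A by (auto simp: S5_def)
      have "fl x (U6 - {x}) = U6" using x by (auto simp: fl_def)
      then show False using oi_ind[OF S x(2) x(1)] True by simp
    qed
    define D where "D = U6 - {0}"
    have DU: "D \<subseteq> U6" unfolding D_def by auto
    have DnS: "D \<notin> S"
    proof
      assume "D \<in> S"
      moreover have "fl 0 D = U6" unfolding D_def by (auto simp: fl_def)
      ultimately show False using oi_ind[OF S, of D 0] True by simp
    qed
    have Dset: "{i. i < 6 \<and> fl i D \<in> S} = insert 0 K"
    proof (rule set_eqI)
      fix i
      show "i \<in> {i. i < 6 \<and> fl i D \<in> S} \<longleftrightarrow> i \<in> insert 0 K"
      proof (cases "i = 0")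
        case True
        have "fl 0 D = U6" unfolding D_def by (auto simp: fl_def)
        then show ?thesis using True \<open>U6 \<in> S\<close> by simp
      next
        case i0: False
        show ?thesis
        proof (cases "i < 6")
          case True
          have "fl i D = U6 - {0, i}" using True i0 unfolding D_def by (auto simp: fl_def)
          then have "fl i D \<in> S \<longleftrightarrow> \<rho> 0 i" by (simp add: \<rho>_def)
          also have "\<dots> \<longleftrightarrow> \<beta> i" using rho_beta[of 0 i] True i0 by (simp add: \<beta>_def)
          finally show ?thesis using True i0 by (simp add: K_def)
        qed (simp add: K_def)
      qed
    qed
    have "0 \<notin> K" by (simp add: K_def \<beta>_def)
    then have "deg 6 S D = Suc (card K)" unfolding deg_def Dset
      using finite_subset[OF KU] by simp
    then have "even (card K)" using oi_odd[OF S DU DnS] by simp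
    then have "card K \<in> {0,2,4,6}" using kle by auto
    then have "card K * (6 - card K) \<le> 8" by auto
    then show ?thesis using cS cL2 cS4 cS6 \<open>S5 = {}\<close> by simp
  next
    case False
    then have "S6 = {}" using S6sub unfolding S6_def by blast
    show ?thesis
    proof (cases "S5 = {}")
      case True
      then show ?thesis using cS cL2 cS4 k9 \<open>S6 = {}\<close> by simp
    next
      case False
      then obtain A where A: "A \<in> S5" by blast
      then obtain x where x0: "x \<in> U6" "A = U6 - {x}" using S5sub by blast
      then have x: "x < 6" "U6 - {x} \<in> S" using A by (auto simp: S5_def)
      have nr: "\<not> \<rho> x i" if "i < 6" "i \<noteq> x" for i
      proof -
        have "fl i (U6 - {x}) = U6 - {x, i}" using that by (auto simp: fl_def)
        then show ?thesis using oi_ind[OF S x(2) that(1)] by (simp add: \<rho>_def)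
      qed
      have "K = {}"
      proof (rule ccontr)
        assume "K \<noteq> {}"
        then obtain y where y: "y < 6" "\<beta> y" by (auto simp: K_def)
        then have y0: "y \<noteq> 0" by (simp add: \<beta>_def)
        show False
        proof (cases "x = y")
          case True
          then have "\<not> \<rho> x 0" using nr[of 0] y0 by simp
          then show ?thesis using rho_beta[of x 0] True y y0 by (simp add: \<beta>_def)
        next
          case False
          have "\<not> \<rho> x y" using nr[of y] y False by simp
          then have bx: "\<beta> x" using rho_beta[of x y] x y False by simp
          then have "x \<noteq> 0" by (simp add: \<beta>_def)
          then have "\<not> \<rho> x 0" using nr[of 0] by simp
          then show ?thesis using rho_beta[of x 0] x bx \<open>x \<noteq> 0\<close> by (simp add: \<beta>_def)
        qed
      qed
      then show ?thesis using cS cL2 cS4 cS5 \<open>S6 = {}\<close> by simp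
    qed
  qed
qed



lemma Q6_bound:
  assumes S: "oi 6 S" shows "card S \<le> 24"
proof (cases "\<forall>u\<in>FR 6 S. card {j. j < 6 \<and> fl j u \<in> HI 6 S} \<le> 3")
  case True
  have "card (HI 6 S) \<le> (\<Sum>u\<in>FR 6 S. card {j. j < 6 \<and> fl j u \<in> HI 6 S})"
    by (rule HI_le[OF S]) simp
  also have "\<dots> \<le> (\<Sum>u\<in>FR 6 S. 3)" by (rule sum_mono) (use True in auto)
  finally have h: "card (HI 6 S) \<le> 3 * card (FR 6 S)" by simp
  have "6 * card S \<le> 3 * card (NZ 6 S) + 2 * card (HI 6 S)"
    "card (NZ 6 S) + card (FR 6 S) + card S = 64" "card (HI 6 S) \<le> card (NZ 6 S)"
    using main_ineq[OF S] by auto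
  then have "78 * card S \<le> 1920" using h by linarith
  then show ?thesis by linarith
next
  case False
  then obtain u where uF: "u \<in> FR 6 S" and m: "card {j. j < 6 \<and> fl j u \<in> HI 6 S} \<ge> 4"
    by (auto simp: not_le)
  define D where "D = {j. j < 6 \<and> fl j u \<in> HI 6 S}"
  have uU: "u \<subseteq> U6" and unS: "u \<notin> S" and du: "deg 6 S u = 0" using uF by (auto simp: FR_def)
  have nbr: "fl i u \<notin> S" if "i < 6" for i
  proof
    assume "fl i u \<in> S"
    then have "i \<in> {i. i < 6 \<and> fl i u \<in> S}" using that by simp
    moreover have "finite {i. i < 6 \<and> fl i u \<in> S}" by simp
    ultimately have "deg 6 S u \<noteq> 0" unfolding deg_def by (metis card_0_eq empty_iff)
    then show False using du by simp
  qed
  have step1: "fl l (fl j u) \<in> S" if j: "j \<in> D" and l: "l < 6" "l \<noteq> j" for j l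
  proof -
    let ?I = "{i. i < 6 \<and> fl i (fl j u) \<in> S}"
    have d5: "card ?I = 5" using j unfolding D_def HI_def deg_def by simp
    have "?I \<subseteq> U6 - {j}" using unS by auto
    moreover have "card (U6 - {j}) = 5" using j unfolding D_def by simp
    ultimately have "?I = U6 - {j}" using d5 by (intro card_subset_eq) auto
    then show ?thesis using l by auto
  qed
  have allD: "a \<in> D" if a: "a < 6" for a
  proof (rule ccontr)
    assume aD: "a \<notin> D"
    let ?t = "fl a u"
    let ?I = "{i. i < 6 \<and> fl i ?t \<in> S}"
    have tnS: "?t \<notin> S" using nbr a by simp
    have tU: "?t \<subseteq> U6" using fl_sub[OF uU a] .
    have "D \<subseteq> ?I"
    proof
      fix j assume jD: "j \<in> D"
      then have "j \<noteq> a" using aD by auto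
      then have "fl a (fl j u) \<in> S" using step1[OF jD a] by simp
      then show "j \<in> ?I" using jD fl_comm[of j a u] unfolding D_def by simp
    qed
    then have "card D \<le> card ?I" by (intro card_mono) auto
    then have ge: "deg 6 S ?t \<ge> 4" using m unfolding D_def deg_def by simp
    have "?I \<subseteq> U6 - {a}" using unS by auto
    then have "card ?I \<le> card (U6 - {a})" by (intro card_mono) auto
    then have le: "deg 6 S ?t \<le> 5" using a unfolding deg_def by simp
    have "deg 6 S ?t = 0 \<or> odd (deg 6 S ?t)" using oi_odd[OF S tU tnS] .
    then have "deg 6 S ?t = 5" using ge le by presburger
    then have "?t \<in> HI 6 S" using tU tnS by (simp add: HI_def)
    then show False using aD a by (simp add: D_def)
  qed
  have pairs: "fl a (fl b u) \<in> S" if "a < 6" "b < 6" "a \<noteq> b" for a b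
    using step1[OF allD[OF that(2)] that(1) that(3)] .
  define S' where "S' = tr u ` S"
  have S': "oi 6 S'" "card S' = card S" using oi_tr[OF S uU] by (simp_all add: S'_def)
  have e: "{} \<notin> S'"
  proof
    assume "{} \<in> S'"
    moreover have "tr u u = {}" by (simp add: tr_def)
    ultimately have "tr u u \<in> tr u ` S" by (simp add: S'_def)
    then show False using unS tr_mem by blast
  qed
  have H2: "B \<in> S'" if B: "B \<subseteq> U6" "card B = 2" for B
  proof -
    obtain a b where ab: "B = {a, b}" "a \<noteq> b" using B(2) by (auto simp: card_2_iff)
    then have ab6: "a < 6" "b < 6" using B(1) by auto
    have "tr u (fl a (fl b u)) = fl a (fl b (tr u u))" by (simp add: tr_fl)
    also have "\<dots> = B" using ab by (auto simp: tr_def fl_def)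
    finally show ?thesis using pairs[OF ab6 ab(2)] unfolding S'_def by (metis image_eqI)
  qed
  have "card S' \<le> 24" by (rule caseA_card[OF S'(1) e H2])
  then show ?thesis using S'(2) by simp
qed



definition sg :: "bool \<Rightarrow> nat set \<Rightarrow> nat set" where
  "sg p B = (if p then B else fl 0 B)"

definition ext :: "nat \<Rightarrow> nat set set \<Rightarrow> nat set set" where
  "ext n S = {A. A \<subseteq> {..<n+2} \<and> sg (n \<in> A \<longleftrightarrow> Suc n \<in> A) (A \<inter> {..<n}) \<in> S}"

definition zz :: "nat \<Rightarrow> nat set \<Rightarrow> nat set" where
  "zz n A = sg (n \<in> A \<longleftrightarrow> Suc n \<in> A) (A \<inter> {..<n})"

lemma sg_sg[simp]: "sg p (sg p B) = B" by (simp add: sg_def)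

lemma zz_fl_low: "i < n \<Longrightarrow> 0 < n \<Longrightarrow> zz n (fl i A) = fl i (zz n A)"
  unfolding zz_def sg_def by (auto simp: fl_def)

lemma zz_fl_high: "i = n \<or> i = Suc n \<Longrightarrow> 0 < n \<Longrightarrow> zz n (fl i A) = fl 0 (zz n A)"
  unfolding zz_def sg_def by (auto simp: fl_def)

lemma zz_sub: "0 < n \<Longrightarrow> zz n A \<subseteq> {..<n}"
  unfolding zz_def sg_def by (auto simp: fl_def)

lemma ext_mem: "A \<in> ext n S \<longleftrightarrow> A \<subseteq> {..<n+2} \<and> zz n A \<in> S"
  by (simp add: ext_def zz_def)

lemma deg_ext:
  assumes n: "0 < n" and AU: "A \<subseteq> {..<n+2}"
  shows "deg (n+2) (ext n S) A = deg n S (zz n A) + (if fl 0 (zz n A) \<in> S then 2 else 0)"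
proof -
  have I: "{i. i < n+2 \<and> fl i A \<in> ext n S} =
     {i. i < n \<and> fl i (zz n A) \<in> S} \<union> (if fl 0 (zz n A) \<in> S then {n, Suc n} else {})"
  proof (rule set_eqI)
    fix i
    have sub: "i < n + 2 \<Longrightarrow> fl i A \<subseteq> {..<n+2}" using fl_sub[OF AU] by simp
    show "i \<in> {i. i < n+2 \<and> fl i A \<in> ext n S} \<longleftrightarrow>
          i \<in> {i. i < n \<and> fl i (zz n A) \<in> S} \<union> (if fl 0 (zz n A) \<in> S then {n, Suc n} else {})"
    proof (cases "i < n")
      case True then show ?thesis using sub zz_fl_low[OF True n] by (auto simp: ext_mem)
    next
      case False
      show ?thesis
      proof (cases "i = n \<or> i = Suc n")
        case True then show ?thesis using sub zz_fl_high[OF True n] by (auto simp: ext_mem)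
      next
        case False2: False
        then show ?thesis using False by auto
      qed
    qed
  qed
  have disj: "{i. i < n \<and> fl i (zz n A) \<in> S} \<inter> (if fl 0 (zz n A) \<in> S then {n, Suc n} else {}) = {}"
    by auto
  show ?thesis unfolding deg_def I
    by (subst card_Un_disjoint) (use disj in auto)
qed

lemma oi_ext:
  assumes S: "oi n S" and n: "0 < n"
  shows "oi (n+2) (ext n S)"
  unfolding oi_def
proof (intro conjI allI ballI impI)
  show "ext n S \<subseteq> Pow {..<n+2}" by (auto simp: ext_def)
next
  fix A i assume A: "A \<in> ext n S" and i: "i < n + 2"
  then have AU: "A \<subseteq> {..<n+2}" and z: "zz n A \<in> S" by (auto simp: ext_mem)
  show "fl i A \<notin> ext n S"
  proof (cases "i < n")
    case True then show ?thesis using oi_ind[OF S z True] zz_fl_low[OF True n] by (simp add: ext_mem)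
  next
    case False
    then have "i = n \<or> i = Suc n" using i by auto
    then show ?thesis using oi_ind[OF S z n] zz_fl_high[OF _ n] by (auto simp: ext_mem)
  qed
next
  fix A assume AU: "A \<subseteq> {..<n+2}" and An: "A \<notin> ext n S"
  then have zn: "zz n A \<notin> S" by (simp add: ext_mem)
  have zU: "zz n A \<subseteq> {..<n}" by (rule zz_sub[OF n])
  have o: "deg n S (zz n A) = 0 \<or> odd (deg n S (zz n A))" using oi_odd[OF S zU zn] .
  show "deg (n+2) (ext n S) A = 0 \<or> odd (deg (n+2) (ext n S) A)"
  proof (cases "fl 0 (zz n A) \<in> S")
    case True
    then have "0 \<in> {i. i < n \<and> fl i (zz n A) \<in> S}" using n by simp
    then have "deg n S (zz n A) \<noteq> 0" unfolding deg_def by (metis card_0_eq empty_iff finite_Collect_conjI finite_lessThan lessThan_def finite_nat_set_iff_bounded mem_Collect_eq)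
    then show ?thesis using o True deg_ext[OF n AU] by simp
  next
    case False then show ?thesis using o deg_ext[OF n AU] by simp
  qed
qed

lemma card_ext:
  assumes S: "oi n S" and n: "0 < n"
  shows "card (ext n S) = 4 * card S"
proof -
  let ?f = "\<lambda>A. (zz n A, n \<in> A, Suc n \<in> A)"
  have "bij_betw ?f (ext n S) (S \<times> (UNIV :: bool set) \<times> (UNIV :: bool set))"
  proof (rule bij_betwI')
    fix A B assume A: "A \<in> ext n S" and B: "B \<in> ext n S"
    show "(?f A = ?f B) = (A = B)"
    proof
      assume eq: "?f A = ?f B"
      then have g: "(n \<in> A) = (n \<in> B)" "(Suc n \<in> A) = (Suc n \<in> B)" by auto
      let ?p = "n \<in> A \<longleftrightarrow> Suc n \<in> A"
      have "sg ?p (A \<inter> {..<n}) = sg ?p (B \<inter> {..<n})" using eq g unfolding zz_def by simp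
      then have "sg ?p (sg ?p (A \<inter> {..<n})) = sg ?p (sg ?p (B \<inter> {..<n}))" by simp
      then have low: "A \<inter> {..<n} = B \<inter> {..<n}" by simp
      have AU: "A \<subseteq> {..<n+2}" and BU: "B \<subseteq> {..<n+2}" using A B by (auto simp: ext_mem)
      show "A = B"
      proof (rule set_eqI)
        fix x
        show "x \<in> A \<longleftrightarrow> x \<in> B"
        proof (cases "x < n")
          case True then show ?thesis using low by blast
        next
          case False
          show ?thesis
          proof (cases "x = n \<or> x = Suc n")
            case True then show ?thesis using g by auto
          next
            case False2: False
            then have "x \<notin> A" "x \<notin> B" using False AU BU by auto
            then show ?thesis by simp
          qed
        qed
      qed
    qed simp
  next
    fix A assume "A \<in> ext n S"
    then show "?f A \<in> S \<times> UNIV \<times> UNIV" by (simp add: ext_mem)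
  next
    fix y assume y: "y \<in> S \<times> (UNIV :: bool set) \<times> (UNIV :: bool set)"
    obtain B p q where yy: "y = (B, p, q)" by (cases y) auto
    have BS: "B \<in> S" using y yy by simp
    have BU: "B \<subseteq> {..<n}" using oi_sub[OF S BS] .
    define A where "A = sg (p \<longleftrightarrow> q) B \<union> (if p then {n} else {}) \<union> (if q then {Suc n} else {})"
    have sgU: "sg (p \<longleftrightarrow> q) B \<subseteq> {..<n}" using BU n by (auto simp: sg_def fl_def)
    have pA: "(n \<in> A) = p" "(Suc n \<in> A) = q" using sgU by (auto simp: A_def)
    have lowA: "A \<inter> {..<n} = sg (p \<longleftrightarrow> q) B" using sgU by (auto simp: A_def)
    have zA: "zz n A = B" unfolding zz_def pA lowA by simp
    have AU: "A \<subseteq> {..<n+2}" using sgU by (auto simp: A_def)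
    show "\<exists>A\<in>ext n S. y = ?f A"
      using AU zA BS pA yy by (intro bexI[of _ A]) (auto simp: ext_mem)
  qed
  then have "card (ext n S) = card (S \<times> (UNIV :: bool set) \<times> (UNIV :: bool set))"
    by (rule bij_betw_same_card)
  also have "\<dots> = 4 * card S"
  proof -
    have "card (UNIV :: (bool \<times> bool) set) = 4"
      by (simp add: UNIV_Times_UNIV[symmetric] card_cartesian_product del: UNIV_Times_UNIV)
    then show ?thesis by (simp add: card_cartesian_product)
  qed
  finally show ?thesis .
qed



lemma bits8:
  fixes i j :: nat
  assumes "i < 8" "j < 8" "odd i = odd j" "odd (i div 2) = odd (j div 2)" "odd (i div 4) = odd (j div 4)"
  shows "i = j"
proof -
  have "i \<in> {0,1,2,3,4,5,6,7}" "j \<in> {0,1,2,3,4,5,6,7}" using assms(1,2) by auto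
  then show ?thesis using assms(3-5) by auto
qed

lemma card_fl_parity: "finite A \<Longrightarrow> even (card (fl i A)) \<longleftrightarrow> odd (card A)"
  unfolding fl_def by (cases "i \<in> A") (auto simp: card_Suc_Diff1 card_Diff_singleton)

definition par :: "nat \<Rightarrow> nat set \<Rightarrow> bool" where
  "par b A \<longleftrightarrow> odd (card {i\<in>A. odd (i div 2 ^ b)})"

lemma par_fl:
  assumes "finite A"
  shows "par b (fl i A) \<longleftrightarrow> (par b A \<noteq> odd (i div 2 ^ b))"
proof (cases "odd (i div 2 ^ b)")
  case True
  have "{j\<in>fl i A. odd (j div 2 ^ b)} = fl i {j\<in>A. odd (j div 2 ^ b)}"
    using True by (auto simp: fl_def)
  then show ?thesis using True card_fl_parity[of "{j\<in>A. odd (j div 2 ^ b)}" i] assms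
    by (simp add: par_def)
next
  case False
  have "{j\<in>fl i A. odd (j div 2 ^ b)} = {j\<in>A. odd (j div 2 ^ b)}"
    using False by (auto simp: fl_def)
  then show ?thesis using False by (simp add: par_def)
qed

abbreviation U8 :: "nat set" where "U8 \<equiv> {..<8}"

definition S8 :: "nat set set" where
  "S8 = {A. A \<subseteq> U8 \<and> even (card A) \<and> (\<exists>b<3. par b A)}"

lemma odd_nbrs:
  assumes AU: "A \<subseteq> U8" and oA: "odd (card A)"
  shows "card {i. i < 8 \<and> fl i A \<in> S8} = 7"
proof -
  have finA: "finite A" using AU finite_subset by blast
  define i0 where "i0 = (if par 0 A then 1 else 0) + (if par 1 A then 2 else 0) + (if par 2 A then 4 else (0::nat))"
  have i0: "i0 < 8" unfolding i0_def by auto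
  have i0b: "odd (i0 div 2 ^ b) = par b A" if "b < 3" for b
  proof -
    have "b = 0 \<or> b = 1 \<or> b = 2" using that by auto
    then show ?thesis unfolding i0_def by (cases "par 0 A"; cases "par 1 A"; cases "par 2 A") auto
  qed
  have mem: "fl i A \<in> S8 \<longleftrightarrow> i \<noteq> i0" if i: "i < 8" for i
  proof -
    have sub: "fl i A \<subseteq> U8" using fl_sub[OF AU i] .
    have ev: "even (card (fl i A))" using card_fl_parity[OF finA] oA by simp
    have "fl i A \<in> S8 \<longleftrightarrow> (\<exists>b<3. par b A \<noteq> odd (i div 2 ^ b))"
      using sub ev par_fl[OF finA] by (simp add: S8_def)
    also have "\<dots> \<longleftrightarrow> (\<exists>b<3. odd (i0 div 2 ^ b) \<noteq> odd (i div 2 ^ b))" using i0b by auto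
    also have "\<dots> \<longleftrightarrow> i \<noteq> i0"
    proof
      assume "\<exists>b<3. odd (i0 div 2 ^ b) \<noteq> odd (i div 2 ^ b)"
      then show "i \<noteq> i0" by auto
    next
      assume ne: "i \<noteq> i0"
      show "\<exists>b<3. odd (i0 div 2 ^ b) \<noteq> odd (i div 2 ^ b)"
      proof (rule ccontr)
        assume "\<not> ?thesis"
        then have "odd (i0 div 2 ^ b) = odd (i div 2 ^ b)" if "b < 3" for b using that by blast
        from this[of 0] this[of 1] this[of 2] have "i0 = i"
          using bits8[OF i0 i] by simp
        then show False using ne by simp
      qed
    qed
    finally show ?thesis .
  qed
  have "{i. i < 8 \<and> fl i A \<in> S8} = U8 - {i0}" using mem by auto
  then show ?thesis using i0 by simp
qed

lemma oi_S8: "oi 8 S8"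
  unfolding oi_def
proof (intro conjI allI ballI impI)
  show "S8 \<subseteq> Pow U8" by (auto simp: S8_def)
next
  fix A and i :: nat assume A: "A \<in> S8" and i: "i < 8"
  then have "A \<subseteq> U8" "even (card A)" by (auto simp: S8_def)
  then have "odd (card (fl i A))" using card_fl_parity[of A i] finite_subset by auto
  then show "fl i A \<notin> S8" by (auto simp: S8_def)
next
  fix A assume AU: "A \<subseteq> U8" and An: "A \<notin> S8"
  show "deg 8 S8 A = 0 \<or> odd (deg 8 S8 A)"
  proof (cases "odd (card A)")
    case True then show ?thesis using odd_nbrs[OF AU True] by (simp add: deg_def)
  next
    case False
    then have "{i. i < 8 \<and> fl i A \<in> S8} = {}"
      using card_fl_parity[of A] finite_subset[OF AU] by (auto simp: S8_def)
    then show ?thesis by (simp add: deg_def)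
  qed
qed

lemma card_S8: "card S8 = 112"
proof -
  define Od where "Od = {A \<in> Pow U8. odd (card A)}"
  define Ev where "Ev = {A \<in> Pow U8. even (card A)}"
  have "fl 0 ` Od = Ev"
  proof
    show "fl 0 ` Od \<subseteq> Ev"
    proof
      fix B assume "B \<in> fl 0 ` Od"
      then obtain A where A: "A \<in> Od" "B = fl 0 A" by auto
      then have "A \<subseteq> U8" "odd (card A)" by (auto simp: Od_def)
      then show "B \<in> Ev" using A(2) card_fl_parity[of A 0] fl_sub[of A 8 0] finite_subset[of A U8]
        by (auto simp: Ev_def)
    qed
    show "Ev \<subseteq> fl 0 ` Od"
    proof
      fix A assume "A \<in> Ev"
      then have "A \<subseteq> U8" "even (card A)" by (auto simp: Ev_def)
      then have "fl 0 A \<in> Od" using card_fl_parity[of A 0] fl_sub[of A 8 0] finite_subset[of A U8]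
        by (auto simp: Od_def)
      then show "A \<in> fl 0 ` Od" by (metis fl_fl image_eqI)
    qed
  qed
  moreover have "inj_on (fl 0) Od" by (metis fl_fl inj_on_inverseI)
  ultimately have "card Ev = card Od" by (metis card_image)
  moreover have "card Ev + card Od = 256"
  proof -
    have e: "Pow U8 = Ev \<union> Od" and d: "Ev \<inter> Od = {}" by (auto simp: Ev_def Od_def)
    have f: "finite Ev" "finite Od" by (auto simp: Ev_def Od_def)
    have "card (Pow U8) = card Ev + card Od" unfolding e using card_Un_disjoint[OF f d] .
    then show ?thesis by (simp add: card_Pow)
  qed
  ultimately have cOd: "card Od = 128" by simp
  have "(\<Sum>A\<in>Pow U8 - S8. deg 8 S8 A) = (\<Sum>A\<in>Pow U8 - S8. if odd (card A) then 7 else 0)"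
  proof (rule sum.cong[OF refl])
    fix A assume A: "A \<in> Pow U8 - S8"
    show "deg 8 S8 A = (if odd (card A) then 7 else 0)"
    proof (cases "odd (card A)")
      case True then show ?thesis using odd_nbrs[of A] A by (simp add: deg_def)
    next
      case False
      then have "{i. i < 8 \<and> fl i A \<in> S8} = {}"
        using card_fl_parity[of A] finite_subset[of A U8] A by (auto simp: S8_def)
      then show ?thesis using False by (simp add: deg_def)
    qed
  qed
  also have "\<dots> = 7 * card {A\<in>Pow U8 - S8. odd (card A)}"
  proof -
    have "card {A\<in>Pow U8 - S8. odd (card A)} = (\<Sum>A\<in>Pow U8 - S8. if odd (card A) then 1 else 0)"
      by (rule card_filter_sum) simp
    moreover have "(\<Sum>A\<in>Pow U8 - S8. if odd (card A) then 7 else 0) =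
        (\<Sum>A\<in>Pow U8 - S8. 7 * (if odd (card A) then 1 else (0::nat)))"
      by (rule sum.cong) auto
    ultimately show ?thesis by (simp only: sum_distrib_left)
  qed
  also have "{A\<in>Pow U8 - S8. odd (card A)} = Od" by (auto simp: Od_def S8_def)
  finally have "8 * card S8 = 7 * 128" using double_count[OF oi_S8] cOd by simp
  then show ?thesis by simp
qed



definition Sk :: "nat \<Rightarrow> nat set set" where
  "Sk k = {A. A \<subseteq> {..<4*k} \<and> odd (card A) \<and>
      ((4*k-1 \<notin> A \<and> card A \<le> 2*k-1) \<or> (4*k-1 \<in> A \<and> card A \<ge> 2*k+1))}"

lemma card_fl: "finite A \<Longrightarrow> card (fl i A) = (if i \<in> A then card A - 1 else card A + 1)"
  unfolding fl_def by (auto simp: card_insert_if)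

lemma oi_Sk:
  assumes k: "k \<ge> 1"
  shows "oi (4*k) (Sk k)"
  unfolding oi_def
proof (intro conjI allI ballI impI)
  show "Sk k \<subseteq> Pow {..<4*k}" by (auto simp: Sk_def)
next
  fix A and i :: nat assume A: "A \<in> Sk k" and i: "i < 4*k"
  then have "A \<subseteq> {..<4*k}" "odd (card A)" by (auto simp: Sk_def)
  then have "even (card (fl i A))" using card_fl_parity[of A i] finite_subset by auto
  then show "fl i A \<notin> Sk k" by (auto simp: Sk_def)
next
  fix A assume AU: "A \<subseteq> {..<4*k}" and An: "A \<notin> Sk k"
  have finA: "finite A" using AU finite_subset by blast
  define n where "n = 4*k"
  define l where "l = n - 1"
  define w where "w = card A"
  have ln: "l < n" "Suc l = n" using k by (auto simp: l_def n_def)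
  let ?I = "{i. i < 4*k \<and> fl i A \<in> Sk k}"
  show "deg (4*k) (Sk k) A = 0 \<or> odd (deg (4*k) (Sk k) A)"
  proof (cases "odd w")
    case True
    have "?I = {}"
    proof -
      have "\<not> fl i A \<in> Sk k" for i
        using card_fl_parity[OF finA, of i] True by (auto simp: Sk_def w_def)
      then show ?thesis by auto
    qed
    then show ?thesis by (simp add: deg_def)
  next
    case False
    then have ew: "even w" by simp
    have memS: "fl i A \<in> Sk k \<longleftrightarrow>
        ((l \<notin> fl i A \<and> card (fl i A) \<le> 2*k-1) \<or> (l \<in> fl i A \<and> card (fl i A) \<ge> 2*k+1))"
      if "i < n" for i
    proof -
      have "fl i A \<subseteq> {..<4*k}" using fl_sub[OF AU] that by (simp add: n_def)
      moreover have "odd (card (fl i A))" using card_fl_parity[OF finA, of i] ew by (simp add: w_def)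
      ultimately show ?thesis by (simp add: Sk_def l_def n_def)
    qed
    show ?thesis
    proof (cases "l \<in> A")
      case False
      have AUl: "A \<subseteq> {..<l}"
      proof
        fix x assume x: "x \<in> A"
        then have "x < Suc l" using AU ln(2) by (auto simp: n_def)
        moreover have "x \<noteq> l" using False x by auto
        ultimately show "x \<in> {..<l}" by simp
      qed
      have wl: "w \<le> l" using card_mono[OF _ AUl] by (simp add: w_def)
      have Ieq: "?I = (if w \<ge> 2*k then {l} else {}) \<union> (if w \<le> 2*k then A else {}) \<union>
                     (if w + 2 \<le> 2*k then {..<l} - A else {})"
      proof (rule set_eqI)
        fix i
        show "i \<in> ?I \<longleftrightarrow> i \<in> (if w \<ge> 2*k then {l} else {}) \<union> (if w \<le> 2*k then A else {}) \<union>
                     (if w + 2 \<le> 2*k then {..<l} - A else {})"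
        proof (cases "i < n")
          case iN: True
          have m: "fl i A \<in> Sk k \<longleftrightarrow>
             ((l \<notin> fl i A \<and> card (fl i A) \<le> 2*k-1) \<or> (l \<in> fl i A \<and> card (fl i A) \<ge> 2*k+1))"
            by (rule memS[OF iN])
          have c: "card (fl i A) = (if i \<in> A then w - 1 else w + 1)" using card_fl[OF finA] by (simp add: w_def)
          have lm: "l \<in> fl i A \<longleftrightarrow> i = l" using False by (auto simp: fl_def)
          show ?thesis
          proof (cases "i = l")
            case True then show ?thesis using m c lm False k ln by (auto simp: n_def)
          next
            case il: False
            show ?thesis
            proof (cases "i \<in> A")
              case True
              have "0 < w" using True finA by (auto simp: w_def card_gt_0_iff)
              then show ?thesis using m c lm il True k ln ew iN by (auto simp: n_def)
            next
              case iA: False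
              have "i < l" using iN il ln by auto
              then show ?thesis using m c lm il iA k ln by (auto simp: n_def)
            qed
          qed
        next
          case False
          then show ?thesis using AU ln by (auto simp: n_def)
        qed
      qed
      have cd: "card ({..<l} - A) = l - w" using AUl by (simp add: card_Diff_subset finite_subset w_def)
      have d: "deg (4*k) (Sk k) A = (if w \<ge> 2*k then 1 else 0) + (if w \<le> 2*k then w else 0) +
                     (if w + 2 \<le> 2*k then l - w else 0)"
        unfolding deg_def Ieq using False finA cd by (auto simp: card_Un_disjoint w_def)
      have l4: "l = 4*k - 1" by (simp add: l_def n_def)
      have o4: "odd (4*k - 1)" using k by (cases k) simp_all
      have "w + 2 \<le> 2*k \<or> w = 2*k \<or> w > 2*k" using ew by presburger
      then show ?thesis
      proof (elim disjE)
        assume h: "w + 2 \<le> 2*k"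
        then have "deg (4*k) (Sk k) A = l" using d wl by simp
        then show ?thesis using l4 o4 by simp
      next
        assume h: "w = 2*k"
        then have "deg (4*k) (Sk k) A = 2*k + 1" using d by simp
        then show ?thesis by simp
      next
        assume h: "w > 2*k"
        then have "deg (4*k) (Sk k) A = 1" using d by simp
        then show ?thesis by simp
      qed
    next
      case True
      have lU: "{l} \<subseteq> A" using True by simp
      have Ieq: "?I = (if w \<le> 2*k then {l} else {}) \<union> (if w \<ge> 2*k+2 then A - {l} else {}) \<union>
                     (if w \<ge> 2*k then {..<n} - A else {})"
      proof (rule set_eqI)
        fix i
        show "i \<in> ?I \<longleftrightarrow> i \<in> (if w \<le> 2*k then {l} else {}) \<union> (if w \<ge> 2*k+2 then A - {l} else {}) \<union>
                     (if w \<ge> 2*k then {..<n} - A else {})"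
        proof (cases "i < n")
          case iN: True
          have m: "fl i A \<in> Sk k \<longleftrightarrow>
             ((l \<notin> fl i A \<and> card (fl i A) \<le> 2*k-1) \<or> (l \<in> fl i A \<and> card (fl i A) \<ge> 2*k+1))"
            by (rule memS[OF iN])
          have c: "card (fl i A) = (if i \<in> A then w - 1 else w + 1)" using card_fl[OF finA] by (simp add: w_def)
          have lm: "l \<in> fl i A \<longleftrightarrow> i \<noteq> l" using True by (auto simp: fl_def)
          have w0: "0 < w" using True finA by (auto simp: w_def card_gt_0_iff)
          show ?thesis
          proof (cases "i = l")
            case True then show ?thesis using m c lm \<open>l \<in> A\<close> k ln w0 ew by (auto simp: n_def)
          next
            case il: False
            show ?thesis
            proof (cases "i \<in> A")
              case True
              then show ?thesis using m c lm il k ln ew w0 iN by (auto simp: n_def)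
            next
              case iA: False
              then show ?thesis using m c lm il k ln iN by (auto simp: n_def)
            qed
          qed
        next
          case False
          then show ?thesis using AU ln by (auto simp: n_def)
        qed
      qed
      have cd: "card ({..<n} - A) = n - w" using AU by (simp add: card_Diff_subset finite_subset w_def n_def)
      have cd2: "card (A - {l}) = w - 1" using True by (simp add: w_def)
      have d: "deg (4*k) (Sk k) A = (if w \<le> 2*k then 1 else 0) + (if w \<ge> 2*k+2 then w - 1 else 0) +
                     (if w \<ge> 2*k then n - w else 0)"
      proof -
        have u1: "card (A - {l} \<union> ({..<n} - A)) = card (A - {l}) + card ({..<n} - A)"
          by (rule card_Un_disjoint) (use finA in auto)
        have u2: "card ({l} \<union> ({..<n} - A)) = card {l} + card ({..<n} - A)"
          by (rule card_Un_disjoint) (use True in auto)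
        show ?thesis unfolding deg_def Ieq using True finA cd cd2 u1 u2 by (auto simp: w_def)
      qed
      have wn: "w \<le> n" using card_mono[OF _ AU] by (simp add: w_def n_def)
      have o4: "odd (4*k - 1)" using k by (cases k) simp_all
      have "w < 2*k \<or> w = 2*k \<or> w \<ge> 2*k + 2" using ew by presburger
      then show ?thesis
      proof (elim disjE)
        assume h: "w < 2*k"
        then have "deg (4*k) (Sk k) A = 1" using d by simp
        then show ?thesis by simp
      next
        assume h: "w = 2*k"
        then have "deg (4*k) (Sk k) A = 1 + 2*k" using d by (simp add: n_def)
        then show ?thesis by simp
      next
        assume h: "w \<ge> 2*k + 2"
        then have "deg (4*k) (Sk k) A = (w - 1) + (4*k - w)" using d by (simp add: n_def)
        also have "\<dots> = 4*k - 1" using h wn by (simp add: n_def)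
        finally show ?thesis using o4 by simp
      qed
    qed
  qed
qed



lemma card_Sk:
  assumes k: "k \<ge> 1"
  shows "card (Sk k) = 2 * (\<Sum>i=1..k. (4 * k - 1) choose (2 * i - 1))"
proof -
  define l where "l = 4*k - 1"
  have l4: "Suc l = 4*k" using k by (simp add: l_def)
  define Sm where "Sm = {A. A \<subseteq> {..<l} \<and> odd (card A) \<and> card A \<le> 2*k-1}"
  define Sp where "Sp = {B. B \<subseteq> {..<l} \<and> even (card B) \<and> card B \<ge> 2*k}"
  have split: "Sk k = Sm \<union> insert l ` Sp"
  proof (rule set_eqI)
    fix A
    show "A \<in> Sk k \<longleftrightarrow> A \<in> Sm \<union> insert l ` Sp"
    proof
      assume A: "A \<in> Sk k"
      then have AU: "A \<subseteq> {..<Suc l}" and oA: "odd (card A)" using l4 by (auto simp: Sk_def)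
      have finA: "finite A" using AU finite_subset by blast
      show "A \<in> Sm \<union> insert l ` Sp"
      proof (cases "l \<in> A")
        case False
        then have "A \<subseteq> {..<l}" using AU by (auto simp: less_Suc_eq)
        then show ?thesis using A False by (auto simp: Sk_def Sm_def l_def)
      next
        case True
        define B where "B = A - {l}"
        have B: "B \<subseteq> {..<l}" using AU by (auto simp: B_def less_Suc_eq)
        have cB: "card B = card A - 1" using True finA by (simp add: B_def)
        have "card A \<ge> 2*k+1" using A True by (auto simp: Sk_def l_def)
        then have "B \<in> Sp" using B cB oA by (auto simp: Sp_def)
        moreover have "A = insert l B" using True by (auto simp: B_def)
        ultimately show ?thesis by auto
      qed
    next
      assume "A \<in> Sm \<union> insert l ` Sp"
      then show "A \<in> Sk k"
      proof
        assume "A \<in> Sm"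
        then show "A \<in> Sk k" using l4 by (auto simp: Sm_def Sk_def l_def)
      next
        assume "A \<in> insert l ` Sp"
        then obtain B where B: "B \<in> Sp" "A = insert l B" by auto
        have BU: "B \<subseteq> {..<l}" and eB: "even (card B)" and gB: "card B \<ge> 2*k" using B by (auto simp: Sp_def)
        have lB: "l \<notin> B" using BU by auto
        have finB: "finite B" using BU finite_subset by blast
        have cA: "card A = Suc (card B)" using B(2) lB finB by simp
        have "A \<subseteq> {..<4*k}" using BU B(2) l4 by auto
        then show "A \<in> Sk k" using cA eB gB B(2) by (auto simp: Sk_def l_def)
      qed
    qed
  qed
  have disj: "Sm \<inter> insert l ` Sp = {}" by (auto simp: Sm_def)
  have finSm: "finite Sm" by (rule finite_subset[of _ "Pow {..<l}"]) (auto simp: Sm_def)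
  have finSp: "finite Sp" by (rule finite_subset[of _ "Pow {..<l}"]) (auto simp: Sp_def)
  have cI: "card (insert l ` Sp) = card Sp"
  proof (rule card_image)
    show "inj_on (insert l) Sp"
    proof (rule inj_onI)
      fix B C assume "B \<in> Sp" "C \<in> Sp" "insert l B = insert l C"
      then show "B = C" unfolding Sp_def by (metis (no_types, lifting) Diff_insert_absorb lessThan_iff
            mem_Collect_eq order_less_irrefl subsetD)
    qed
  qed
  have cSp: "card Sp = card Sm"
  proof -
    have m1: "{..<l} - B \<in> Sm" if B: "B \<in> Sp" for B
    proof -
      have BU: "B \<subseteq> {..<l}" and eB: "even (card B)" and gB: "card B \<ge> 2*k" using B by (auto simp: Sp_def)
      have c: "card ({..<l} - B) = l - card B" using BU by (simp add: card_Diff_subset finite_subset)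
      have "card B \<le> l" using card_mono[OF _ BU] by simp
      then show "{..<l} - B \<in> Sm" using c eB gB k unfolding Sm_def l_def by auto
    qed
    have m2: "{..<l} - B \<in> Sp" if B: "B \<in> Sm" for B
    proof -
      have BU: "B \<subseteq> {..<l}" and eB: "odd (card B)" and gB: "card B \<le> 2*k-1" using B by (auto simp: Sm_def)
      have c: "card ({..<l} - B) = l - card B" using BU by (simp add: card_Diff_subset finite_subset)
      then show "{..<l} - B \<in> Sp" using c eB gB k unfolding Sp_def l_def by auto
    qed
    have "bij_betw (\<lambda>B. {..<l} - B) Sp Sm"
    proof (rule bij_betw_byWitness[where f'="\<lambda>B. {..<l} - B"])
      show "\<forall>a\<in>Sp. {..<l} - ({..<l} - a) = a" by (auto simp: Sp_def)
      show "\<forall>a\<in>Sm. {..<l} - ({..<l} - a) = a" by (auto simp: Sm_def)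
      show "(\<lambda>B. {..<l} - B) ` Sp \<subseteq> Sm" using m1 by blast
      show "(\<lambda>B. {..<l} - B) ` Sm \<subseteq> Sp" using m2 by blast
    qed
    then show ?thesis by (rule bij_betw_same_card)
  qed
  have cSm: "card Sm = (\<Sum>i=1..k. l choose (2 * i - 1))"
  proof -
    define L where "L i = {A. A \<subseteq> {..<l} \<and> card A = 2*i - 1}" for i
    have "Sm = (\<Union>i\<in>{1..k}. L i)"
    proof (rule set_eqI)
      fix A
      show "A \<in> Sm \<longleftrightarrow> A \<in> (\<Union>i\<in>{1..k}. L i)"
      proof
        assume "A \<in> Sm"
        then have A: "A \<subseteq> {..<l}" "odd (card A)" "card A \<le> 2*k-1" by (auto simp: Sm_def)
        define i where "i = (card A + 1) div 2"
        have "card A = 2*i - 1" "1 \<le> i" "i \<le> k" using A(2,3) k unfolding i_def by presburger+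
        then show "A \<in> (\<Union>i\<in>{1..k}. L i)" using A(1) by (auto simp: L_def)
      next
        assume "A \<in> (\<Union>i\<in>{1..k}. L i)"
        then obtain i where i: "1 \<le> i" "i \<le> k" "A \<subseteq> {..<l}" "card A = 2*i - 1" by (auto simp: L_def)
        then show "A \<in> Sm" unfolding Sm_def by auto
      qed
    qed
    moreover have "card (\<Union>i\<in>{1..k}. L i) = (\<Sum>i=1..k. card (L i))"
    proof (rule card_UN_disjoint)
      show "finite {1..k}" by simp
      show "\<forall>i\<in>{1..k}. finite (L i)"
        by (auto intro: finite_subset[of _ "Pow {..<l}"] simp: L_def)
      show "\<forall>i\<in>{1..k}. \<forall>j\<in>{1..k}. i \<noteq> j \<longrightarrow> L i \<inter> L j = {}"
        by (auto simp: L_def)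
    qed
    moreover have "card (L i) = l choose (2*i - 1)" for i
      unfolding L_def using n_subsets[of "{..<l}" "2*i - 1"] by simp
    ultimately show ?thesis by simp
  qed
  have "card (Sk k) = card Sm + card (insert l ` Sp)"
    unfolding split by (rule card_Un_disjoint[OF finSm _ disj]) (use finSp in simp)
  then show ?thesis using cI cSp cSm by (simp add: l_def)
qed



lemma big_family: "\<exists>S. oi (8 + 2*m) S \<and> card S = 112 * 4 ^ m"
proof (induction m)
  case 0 then show ?case using oi_S8 card_S8 by auto
next
  case (Suc m)
  then obtain S where S: "oi (8 + 2*m) S" "card S = 112 * 4 ^ m" by auto
  have "oi (8 + 2*m + 2) (ext (8 + 2*m) S)" by (rule oi_ext[OF S(1)]) simp
  moreover have "card (ext (8 + 2*m) S) = 4 * card S" by (rule card_ext[OF S(1)]) simp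
  ultimately show ?case using S(2) by (intro exI[of _ "ext (8 + 2*m) S"]) simp
qed

theorem proposition14:
  shows "(\<forall>k::nat. k \<ge> 1 \<longrightarrow>
            alpha_od_cube (4 * k) \<ge> 2 * (\<Sum>i=1..k. (4 * k - 1) choose (2 * i - 1)))
       \<and> alpha_od_cube 4 = 6 \<and> alpha_od_cube 6 = 24 \<and> alpha_od_cube 8 = 112
       \<and> (\<forall>d::nat. even d \<and> d \<ge> 8 \<longrightarrow> real (alpha_od_cube d) \<ge> 7 / 16 * (2::real) ^ d)"
proof (intro conjI allI impI)
  fix k :: nat assume k: "k \<ge> 1"
  show "alpha_od_cube (4 * k) \<ge> 2 * (\<Sum>i=1..k. (4 * k - 1) choose (2 * i - 1))"
    using alpha_ge[OF oi_Sk[OF k]] card_Sk[OF k] by simp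
next
  have o4: "oi 4 (Sk 1)" using oi_Sk[of 1] by simp
  have c4: "card (Sk 1) = 6" using card_Sk[of 1] by simp
  show "alpha_od_cube 4 = 6"
  proof -
    have "alpha_od_cube 4 \<le> 6" by (rule alpha_le) (rule Q4_bound)
    moreover have "6 \<le> alpha_od_cube 4" using alpha_ge[OF o4] c4 by simp
    ultimately show ?thesis by linarith
  qed
  have o6: "oi 6 (ext 4 (Sk 1))" using oi_ext[OF o4] by simp
  have c6: "card (ext 4 (Sk 1)) = 24" using card_ext[OF o4] c4 by simp
  show "alpha_od_cube 6 = 24"
  proof -
    have "alpha_od_cube 6 \<le> 24" by (rule alpha_le) (rule Q6_bound)
    moreover have "24 \<le> alpha_od_cube 6" using alpha_ge[OF o6] c6 by simp
    ultimately show ?thesis by linarith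
  qed
  show "alpha_od_cube 8 = 112"
  proof -
    have "alpha_od_cube 8 \<le> 112" by (rule alpha_le) (rule Q8_bound)
    moreover have "112 \<le> alpha_od_cube 8" using alpha_ge[OF oi_S8] card_S8 by simp
    ultimately show ?thesis by linarith
  qed
next
  fix d :: nat assume d: "even d \<and> d \<ge> 8"
  then obtain m where m: "d = 8 + 2*m" by (metis add_diff_inverse_nat dvd_diff_nat evenE even_numeral not_le)
  obtain S where S: "oi d S" "card S = 112 * 4 ^ m" using big_family m by blast
  have "112 * 4 ^ m \<le> alpha_od_cube d" using alpha_ge[OF S(1)] S(2) by simp
  then have "real (112 * 4 ^ m) \<le> real (alpha_od_cube d)" by (simp only: of_nat_le_iff)
  moreover have "7 / 16 * (2::real) ^ d = real (112 * 4 ^ m)"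
    by (simp add: m power_add power_mult)
  ultimately show "real (alpha_od_cube d) \<ge> 7 / 16 * (2::real) ^ d" by simp
qed

end
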